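(* Let $\alpha\in(1,2)$ and $\beta=1-\log_2\alpha\in(0,1)$, and let $s=\beta/2$. The Riesz operator $\widetilde{\mathcal R}^\beta$, i.e. convolution on $\mathbb{Z}_2$ by $\tilde k^\beta(x)=\frac{2}{\zeta(\beta)}|x|_2^{\beta-1}$, extends to a continuous linear operator from $H^{-s}(\mathbb{Z}_2)$ onto $H^{s}(\mathbb{Z}_2)$.
   Context: $\mathbb{Z}_2$ is the ring of 2-adic integers, $|\cdot|_2$ the 2-adic absolute value, $\mu$ the Haar probability measure on $\mathbb{Z}_2$. $\zeta(\beta)=(1-2^{-\beta})^{-1}$. Convolution on $\mathbb{Z}_2$: $(\tilde k^\beta\star f)(a)=\int_{\mathbb{Z}_2}\tilde k^\beta(a-x)f(x)\,d\mu(x)$. $\Lambda=\mathbb{Q}_2/\mathbb{Z}_2$; for $f$ on $\mathbb{Z}_2$ and $\lambda\in\Lambda$, $\mathcal F(f)(\lambda)=\int_{\mathbb{Z}_2}e^{-2i\pi\lambda x}f(x)\,d\mu(x)$. For $t\in\mathbb{R}$, $H^t(\mathbb{Z}_2)$ is the completion of the space of locally constant functions on $\mathbb{Z}_2$ for the norm $\|f\|_{H^t(\mathbb{Z}_2)}=\big(\sum_{\lambda\in\Lambda}(1+|\lambda|_2)^{2t}|\mathcal F(f)(\lambda)|^2\big)^{1/2}$. *)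

theory Defs
  imports "HOL-Probability.Probability"
begin

text \<open>2-adic integers are represented by their binary digit sequences:
  x :: nat \<Rightarrow> bool, with x i the i-th binary digit, i.e. x = sum of 2^i over {i. x i}.\<close>

type_synonym Z2 = "nat \<Rightarrow> bool"

definition z2_res :: "Z2 \<Rightarrow> nat \<Rightarrow> int" where
  "z2_res x n = (\<Sum>i<n. if x i then 2 ^ i else 0)"

text \<open>Subtraction in Z_2, digit by digit: the i-th digit of x - y is the i-th binary digit of
  (x - y) mod 2^(i+1).\<close>
definition z2_sub :: "Z2 \<Rightarrow> Z2 \<Rightarrow> Z2" where
  "z2_sub x y = (\<lambda>i. odd (((z2_res x (Suc i) - z2_res y (Suc i)) mod 2 ^ Suc i) div 2 ^ i))"

definition z2_abs :: "Z2 \<Rightarrow> real" where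
  "z2_abs x = (if (\<forall>i. \<not> x i) then 0 else (1/2) ^ (LEAST i. x i))"

definition haar :: "Z2 measure" where
  "haar = (\<Pi>\<^sub>M i\<in>(UNIV::nat set). measure_pmf (bernoulli_pmf (1/2)))"

text \<open>Locally constant functions on Z_2 (the balls of Z_2 are the cylinders given by
  prescribing the first n digits).\<close>
definition locally_constant :: "(Z2 \<Rightarrow> 'b) \<Rightarrow> bool" where
  "locally_constant f \<longleftrightarrow> (\<forall>x. \<exists>n. \<forall>y. (\<forall>i<n. y i = x i) \<longrightarrow> f y = f x)"

text \<open>Lambda = Q_2/Z_2, represented by the dyadic rationals in [0,1).\<close>
definition Lambda :: "rat set" where
  "Lambda = {q. 0 \<le> q \<and> q < 1 \<and> (\<exists>n::nat. \<exists>k::int. q = of_int k / 2 ^ n)}"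

text \<open>2-adic absolute value on Lambda: |k/2^n|_2 = 2^n for k odd, and |0|_2 = 0.\<close>
definition lam_abs :: "rat \<Rightarrow> real" where
  "lam_abs q = (if q = 0 then 0 else real_of_int (snd (quotient_of q)))"

definition lam_exp :: "rat \<Rightarrow> nat" where
  "lam_exp q = (LEAST n::nat. \<exists>k::int. q = of_int k / 2 ^ n)"

text \<open>The character x \<mapsto> exp(-2 i pi lambda x); for lambda = k/2^n it only depends on x mod 2^n.\<close>
definition chr :: "rat \<Rightarrow> Z2 \<Rightarrow> complex" where
  "chr q x = cis (- 2 * pi * real_of_rat q * real_of_int (z2_res x (lam_exp q)))"

definition fourier :: "(Z2 \<Rightarrow> complex) \<Rightarrow> rat \<Rightarrow> complex" where
  "fourier f q = (if q \<in> Lambda then integral\<^sup>L haar (\<lambda>x. chr q x * f x) else 0)"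

text \<open>H^t(Z_2), realized (isometrically, via the Fourier transform) as the weighted l^2 space
  on Lambda, which is the completion of the locally constant functions for the H^t norm.\<close>
definition H_norm :: "real \<Rightarrow> (rat \<Rightarrow> complex) \<Rightarrow> real" where
  "H_norm t c = sqrt (\<Sum>\<^sub>\<infinity>q\<in>Lambda. (1 + lam_abs q) powr (2 * t) * (cmod (c q))\<^sup>2)"

definition H_space :: "real \<Rightarrow> (rat \<Rightarrow> complex) set" where
  "H_space t = {c. (\<forall>q. q \<notin> Lambda \<longrightarrow> c q = 0) \<and>
      (\<lambda>q. (1 + lam_abs q) powr (2 * t) * (cmod (c q))\<^sup>2) summable_on Lambda}"

definition zeta2 :: "real \<Rightarrow> real" where
  "zeta2 \<beta> = 1 / (1 - 2 powr (- \<beta>))"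

definition riesz_kernel :: "real \<Rightarrow> Z2 \<Rightarrow> real" where
  "riesz_kernel \<beta> x = 2 / zeta2 \<beta> * z2_abs x powr (\<beta> - 1)"

definition conv :: "(Z2 \<Rightarrow> real) \<Rightarrow> (Z2 \<Rightarrow> complex) \<Rightarrow> Z2 \<Rightarrow> complex" where
  "conv k f a = integral\<^sup>L haar (\<lambda>x. complex_of_real (k (z2_sub a x)) * f x)"

end

theory Submission
  imports Defs
begin


abbreviation BB :: "bool measure" where "BB \<equiv> measure_pmf (bernoulli_pmf (1/2))"

lemma compact_Z2: "compact (UNIV :: Z2 set)"
proof -
  have "compact_space (euclidean :: bool topology)"
    by (simp add: compact_space_def finite_imp_compact)
  then have "compact_space (product_topology (\<lambda>i::nat. euclidean :: bool topology) UNIV)"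
    by (simp add: compact_space_product_topology)
  then have "compact_space (euclidean :: Z2 topology)"
    by (simp add: euclidean_product_topology)
  then show ?thesis
    by (simp add: compact_space_def)
qed

definition cyl :: "Z2 \<Rightarrow> nat \<Rightarrow> Z2 set" where
  "cyl x n = {a. \<forall>i<n. a i = x i}"

lemma open_cyl: "open (cyl x n)"
proof -
  have o: "open {b::bool}" for b by (rule discrete_topology_class.open_discrete)
  have "open {f::Z2. \<forall>i\<in>{..<n}. f (id i) \<in> {x i}}"
    apply (rule product_topology_basis')
    using o by auto
  moreover have "{f::Z2. \<forall>i\<in>{..<n}. f (id i) \<in> {x i}} = cyl x n" by (auto simp: cyl_def)
  ultimately show ?thesis by simp
qed

lemma lc_uniform:
  assumes "locally_constant f"
  shows "\<exists>N. \<forall>x y. (\<forall>i<N. x i = y i) \<longrightarrow> f x = f y"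
proof -
  from assms obtain n where n: "\<And>x y. (\<forall>i<n x. y i = x i) \<Longrightarrow> f y = f x"
    unfolding locally_constant_def by metis
  have "\<forall>x\<in>UNIV. open (cyl x (n x))" by (simp add: open_cyl)
  moreover have "UNIV \<subseteq> (\<Union>x\<in>UNIV. cyl x (n x))" by (auto simp: cyl_def)
  ultimately obtain K where K: "finite K" "UNIV \<subseteq> (\<Union>x\<in>K. cyl x (n x))"
    using compactE_image[OF compact_Z2, of UNIV "\<lambda>x. cyl x (n x)"] by auto
  define N where "N = (\<Sum>x\<in>K. n x)"
  have "f y = f z" if "\<forall>i<N. y i = z i" for y z
  proof -
    obtain x where x: "x \<in> K" "y \<in> cyl x (n x)" using K by blast
    have "n x \<le> N" unfolding N_def using K(1) x(1) by (simp add: member_le_sum)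
    then have "z \<in> cyl x (n x)" using x that by (auto simp: cyl_def)
    then show ?thesis using x n by (auto simp: cyl_def)
  qed
  then show ?thesis by blast
qed

lemma space_haar[simp]: "space haar = UNIV"
  by (simp add: haar_def space_PiM)

interpretation PH: product_prob_space "\<lambda>_::nat. BB" UNIV
  by unfold_locales

lemma prob_haar: "prob_space haar"
  unfolding haar_def by (rule PH.prob_space_axioms)

interpretation H: prob_space haar by (rule prob_haar)

lemma coord_meas[measurable]: "(\<lambda>a. a i) \<in> measurable haar (count_space UNIV)"
proof -
  have "(\<lambda>a. a i) \<in> measurable haar BB"
    unfolding haar_def by (rule measurable_component_singleton) simp
  then show ?thesis by (simp add: measurable_cong_sets)
qed

lemma coord_pred[measurable]: "Measurable.pred haar (\<lambda>a. a i)"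
  using coord_meas[of i] by (simp add: pred_def measurable_count_space_eq2 )

lemma emeasure_coll:
  assumes "finite J"
  shows "emeasure haar {a. \<forall>i\<in>J. a i = b i} = (1/2) ^ card J"
proof -
  have "emeasure haar {a\<in>space haar. \<forall>i\<in>J. a i \<in> {b i}} = (\<Prod>i\<in>J. emeasure BB {b i})"
    unfolding haar_def by (rule PH.emeasure_PiM_Collect) (use assms in auto)
  moreover have "emeasure BB {c} = 1/2" for c
    by (cases c) (simp_all add: emeasure_pmf_single ennreal_minus divide_ennreal_def)
  ultimately show ?thesis by (simp add: ennreal_power)
qed

lemma pair_meas: "Measurable.pred (haar \<Otimes>\<^sub>M haar) (\<lambda>p. (\<forall>i<j. fst p i = snd p i) \<and> fst p j \<noteq> snd p j)"
  by measurable



lemma z2_res_Suc: "z2_res x (Suc n) = z2_res x n + (if x n then 2 ^ n else 0)"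
  by (simp add: z2_res_def)

lemma z2_res_cong: "(\<forall>i<n. a i = x i) \<Longrightarrow> z2_res a n = z2_res x n"
  unfolding z2_res_def by (intro sum.cong) auto

lemma z2_sub_agree: "(\<forall>i'\<le>i. a i' = x i') \<Longrightarrow> \<not> z2_sub a x i"
proof -
  assume "\<forall>i'\<le>i. a i' = x i'"
  then have "z2_res a (Suc i) = z2_res x (Suc i)" by (intro z2_res_cong) auto
  then show ?thesis by (simp add: z2_sub_def)
qed

lemma z2_sub_first: "(\<forall>i<d. a i = x i) \<Longrightarrow> a d \<noteq> x d \<Longrightarrow> z2_sub a x d"
proof -
  assume h: "\<forall>i<d. a i = x i" "a d \<noteq> x d"
  have e: "z2_res a d = z2_res x d" using h by (intro z2_res_cong) auto
  have p: "(2::int) ^ Suc d = 2 * 2 ^ d" by simp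
  have m1: "((2::int) ^ d) mod (2 ^ Suc d) = 2 ^ d" by (simp add: p)
  have m2: "(-((2::int) ^ d)) mod (2 ^ Suc d) = 2 ^ d"
    using m1 by (simp add: zmod_zminus1_eq_if p)
  show ?thesis
  proof (cases "a d")
    case True
    then have "x d = False" using h(2) by simp
    then show ?thesis using True e m1 by (simp add: z2_sub_def z2_res_Suc)
  next
    case False
    then have "x d = True" using h(2) by simp
    then show ?thesis using False e m2 by (simp add: z2_sub_def z2_res_Suc)
  qed
qed

lemma least_diff:
  fixes a x :: Z2 and j :: nat
  assumes "a \<noteq> x"
  shows "(\<forall>i<j. a i = x i) \<and> a j \<noteq> x j \<longleftrightarrow> j = (LEAST i. a i \<noteq> x i)"
proof -
  have "\<exists>i. a i \<noteq> x i" using assms by (simp add: fun_eq_iff)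
  then obtain i0 where i0: "a i0 \<noteq> x i0" by blast
  let ?d = "LEAST i. a i \<noteq> x i"
  have d1: "a ?d \<noteq> x ?d" using LeastI[where P="\<lambda>i::nat. a i \<noteq> x i" and k=i0, OF i0] .
  have d2: "\<forall>i<?d. a i = x i"
  proof (intro allI impI)
    fix i assume "i < ?d"
    then have "\<not> (a i \<noteq> x i)" by (rule not_less_Least)
    then show "a i = x i" by simp
  qed
  show ?thesis
  proof
    assume "(\<forall>i<j. a i = x i) \<and> a j \<noteq> x j"
    then have h: "\<forall>i<j. a i = x i" "a j \<noteq> x j" by auto
    have "?d \<le> j" using h(2) by (rule Least_le)
    then have "\<not> j < ?d" by simp
    moreover have "\<not> ?d < j"
    proof
      assume "?d < j"
      then have "a ?d = x ?d" using h(1) by blast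
      then show False using d1 by simp
    qed
    ultimately show "j = ?d" by linarith
  next
    assume j: "j = ?d"
    show "(\<forall>i<j. a i = x i) \<and> a j \<noteq> x j" unfolding j using d1 d2 by blast
  qed
qed

lemma z2_abs_sub:
  fixes a x :: Z2
  shows "z2_abs (z2_sub a x) = (if a = x then 0 else (1/2) ^ (LEAST i. a i \<noteq> x i))"
proof (cases "a = x")
  case True
  then show ?thesis by (simp add: z2_abs_def z2_sub_def)
next
  case False
  let ?d = "LEAST i. a i \<noteq> x i"
  have dd: "(\<forall>i<?d. a i = x i) \<and> a ?d \<noteq> x ?d" by (rule iffD2[OF least_diff[OF False] refl])
  have d: "\<forall>i<?d. a i = x i" "a ?d \<noteq> x ?d" using dd by (rule conjunct1, rule conjunct2)
  have s1: "z2_sub a x ?d" using d by (rule z2_sub_first)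
  have s2: "\<not> z2_sub a x i" if "i < ?d" for i
  proof -
    have "\<forall>i'\<le>i. a i' = x i'" using d(1) that by (meson le_less_trans)
    then show ?thesis by (rule z2_sub_agree)
  qed
  have "(LEAST i. z2_sub a x i) = ?d"
    proof (rule Least_equality)
    show "z2_sub a x ?d" by (rule s1)
  next
    fix y assume "z2_sub a x y"
    then show "?d \<le> y" using s2 by (meson not_le)
  qed
  then show ?thesis using s1 False by (auto simp: z2_abs_def)
qed

definition EE :: "Z2 \<Rightarrow> nat \<Rightarrow> Z2 set" where
  "EE x j = {a. (\<forall>i<j. a i = x i) \<and> a j \<noteq> x j}"

definition Kc :: "real \<Rightarrow> nat \<Rightarrow> real" where
  "Kc \<beta> j = 2 / zeta2 \<beta> * ((1/2) ^ j) powr (\<beta> - 1)"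

lemma kern_sum: "riesz_kernel \<beta> (z2_sub a x) = (\<Sum>j. Kc \<beta> j * indicator (EE x j) a)"
proof (cases "a = x")
  case True
  then show ?thesis by (simp add: riesz_kernel_def z2_abs_sub EE_def)
next
  case False
  let ?d = "LEAST i. a i \<noteq> x i"
  have "(\<lambda>j. Kc \<beta> j * indicator (EE x j) a) = (\<lambda>j. if j = ?d then Kc \<beta> j else 0)"
    using least_diff[OF False] by (auto simp: EE_def indicator_def fun_eq_iff)
  then have "(\<Sum>j. Kc \<beta> j * indicator (EE x j) a) = Kc \<beta> ?d"
    using sums_single[of ?d "Kc \<beta>"] by (simp add: sums_iff)
  then show ?thesis using False by (simp add: riesz_kernel_def z2_abs_sub Kc_def)
qed



lemma cyl_sets[measurable]: "cyl x n \<in> sets haar"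
proof -
  have "Measurable.pred haar (\<lambda>a. \<forall>i\<in>{..<n}. a i = x i)" by measurable
  moreover have "cyl x n = {a \<in> space haar. \<forall>i\<in>{..<n}. a i = x i}" by (auto simp: cyl_def)
  ultimately show ?thesis by (simp add: pred_def)
qed

lemma EE_sets[measurable]: "EE x j \<in> sets haar"
proof -
  have "Measurable.pred haar (\<lambda>a. (\<forall>i\<in>{..<j}. a i = x i) \<and> a j = (\<not> x j))" by measurable
  moreover have "EE x j = {a \<in> space haar. (\<forall>i\<in>{..<j}. a i = x i) \<and> a j = (\<not> x j)}" by (auto simp: EE_def)
  ultimately show ?thesis by (simp add: pred_def)
qed

lemma emeasure_cyl: "emeasure haar (cyl x n) = (1/2) ^ n"
proof -
  have "cyl x n = {a. \<forall>i\<in>{..<n}. a i = x i}" by (auto simp: cyl_def)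
  then show ?thesis using emeasure_coll[of "{..<n}" x] by simp
qed

lemma half_pow: "(1/2::ennreal)^n = ennreal ((1/2)^n)"
proof -
  have "(1/2::ennreal) = ennreal (1/2)"
    by (metis divide_ennreal ennreal_1 ennreal_numeral zero_le_one zero_less_numeral)
  then show ?thesis by (subst (1) \<open>(1/2::ennreal) = ennreal (1/2)\<close>) (rule ennreal_power, simp)
qed

lemma measure_cyl: "measure haar (cyl x n) = (1/2) ^ n"
  using emeasure_cyl[of x n] by (simp add: H.emeasure_eq_measure half_pow)

lemma emeasure_EE: "emeasure haar (EE x j) = (1/2) ^ Suc j"
proof -
  have "EE x j = {a. \<forall>i\<in>insert j {..<j}. a i = (x(j := \<not> x j)) i}"
    unfolding EE_def by (intro Collect_cong) auto
  then show ?thesis using emeasure_coll[of "insert j {..<j}" "x(j := \<not> x j)"] by simp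
qed

lemma measure_EE: "measure haar (EE x j) = (1/2) ^ Suc j"
  using emeasure_EE[of x j] unfolding half_pow by (simp add: H.emeasure_eq_measure del: power_Suc)

definition flip :: "nat \<Rightarrow> Z2 \<Rightarrow> Z2" where "flip m a = a(m := \<not> a m)"

lemma flip_meas[measurable]: "flip m \<in> measurable haar haar"
proof -
  have "(\<lambda>a. flip m a) \<in> measurable haar (PiM UNIV (\<lambda>_. BB))"
  proof (rule measurable_PiM_single')
    fix i :: nat
    have "Measurable.pred haar (\<lambda>a. if i = m then \<not> a m else a i)" by measurable
    then have "(\<lambda>a. flip m a i) \<in> measurable haar (count_space UNIV)"
      by (simp add: pred_def flip_def)
    then show "(\<lambda>a. flip m a i) \<in> measurable haar BB"
      by (simp add: measurable_cong_sets)
  qed (simp add: space_PiM)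
  then show ?thesis by (simp add: haar_def)
qed

lemma pmf_half: "pmf (bernoulli_pmf (1/2)) b = 1/2"
  by (cases b) simp_all

lemma emeasure_BB_Not: "emeasure BB (Not ` A) = emeasure BB A"
proof -
  have "emeasure BB (Not ` A) = ennreal (\<Sum>s\<in>Not ` A. pmf (bernoulli_pmf (1/2)) s)"
    by (rule emeasure_measure_pmf_finite) simp
  also have "(\<Sum>s\<in>Not ` A. pmf (bernoulli_pmf (1/2)) s) = (\<Sum>s\<in>A. pmf (bernoulli_pmf (1/2)) (\<not> s))"
    by (subst sum.reindex) (simp_all add: inj_on_def)
  also have "\<dots> = (\<Sum>s\<in>A. pmf (bernoulli_pmf (1/2)) s)"
    by (simp add: pmf_half)
  also have "ennreal \<dots> = emeasure BB A"
    by (rule emeasure_measure_pmf_finite[symmetric]) simp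
  finally show ?thesis .
qed

lemma Not_image_iff: "b \<in> Not ` A \<longleftrightarrow> (\<not> b) \<in> A"
proof
  assume "b \<in> Not ` A" then obtain c where "c \<in> A" "b = (\<not> c)" by blast
  then show "(\<not> b) \<in> A" by simp
next
  assume "(\<not> b) \<in> A" then have "(\<not> (\<not> b)) \<in> Not ` A" by (rule imageI)
  then show "b \<in> Not ` A" by simp
qed

lemma distr_flip: "distr haar haar (flip m) = haar"
proof -
  have "distr haar haar (flip m) = PiM UNIV (\<lambda>_. BB)"
  proof (rule PH.PiM_eq)
    show "sets (distr haar haar (flip m)) = sets (PiM UNIV (\<lambda>_. BB))" by (simp add: haar_def)
  next
    fix J F assume J: "finite J" "J \<subseteq> (UNIV::nat set)" and F: "\<And>j. j \<in> J \<Longrightarrow> F j \<in> sets BB"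
    define F' where "F' j = (if j = m then Not ` F j else F j)" for j
    have key: "flip m a j \<in> F j \<longleftrightarrow> a j \<in> F' j" for a j
    proof (cases "j = m")
      case True
      have "((\<not> a m) \<in> F m) \<longleftrightarrow> a m \<in> Not ` F m"
        by (simp add: Not_image_iff)
      then show ?thesis using True by (simp add: flip_def F'_def)
    qed (simp add: flip_def F'_def)
    have pre: "flip m -` prod_emb UNIV (\<lambda>_. BB) J (Pi\<^sub>E J F)
        = prod_emb UNIV (\<lambda>_. BB) J (Pi\<^sub>E J F')"
      by (auto simp: prod_emb_iff PiE_iff key)
    have "emeasure (distr haar haar (flip m)) (prod_emb UNIV (\<lambda>_. BB) J (Pi\<^sub>E J F))
        = emeasure haar (prod_emb UNIV (\<lambda>_. BB) J (Pi\<^sub>E J F'))"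
    proof -
      have "prod_emb UNIV (\<lambda>_. BB) J (Pi\<^sub>E J F) \<in> sets haar"
        unfolding haar_def by (rule sets_PiM_I) (use J F in auto)
      then show ?thesis by (simp add: emeasure_distr pre)
    qed
    also have "\<dots> = (\<Prod>j\<in>J. emeasure BB (F' j))"
      unfolding haar_def by (rule PH.emeasure_PiM_emb) (use J in auto)
    also have "\<dots> = (\<Prod>j\<in>J. emeasure BB (F j))"
      by (intro prod.cong) (auto simp: F'_def emeasure_BB_Not)
    finally show "emeasure (distr haar haar (flip m)) (prod_emb UNIV (\<lambda>_. BB) J (Pi\<^sub>E J F))
        = (\<Prod>j\<in>J. emeasure BB (F j))" .
  qed
  then show ?thesis by (simp add: haar_def)
qed

lemma integral_flip:
  fixes g :: "Z2 \<Rightarrow> 'b::{banach, second_countable_topology}"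
  assumes "g \<in> borel_measurable haar"
  shows "(\<integral>a. g (flip m a) \<partial>haar) = integral\<^sup>L haar g"
proof -
  have "integral\<^sup>L (distr haar haar (flip m)) g = (\<integral>a. g (flip m a) \<partial>haar)"
    by (rule integral_distr) (use assms in auto)
  then show ?thesis by (simp add: distr_flip)
qed



lemma lam_exp_le: "q = of_int k / 2 ^ n \<Longrightarrow> lam_exp q \<le> n"
  unfolding lam_exp_def by (rule Least_le) blast

lemma lam_rep:
  assumes "q \<in> Lambda" shows "\<exists>k. q = of_int k / 2 ^ lam_exp q"
proof -
  from assms obtain n k where "q = of_int k / 2 ^ n" by (auto simp: Lambda_def)
  then have "\<exists>n. \<exists>k::int. q = of_int k / 2 ^ n" by blast
  then show ?thesis unfolding lam_exp_def by (rule LeastI_ex)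
qed

lemma lam_exp_zero[simp]: "lam_exp 0 = 0"
  using lam_exp_le[of 0 0 0] by simp

lemma lam_odd:
  assumes "q \<in> Lambda" "q \<noteq> 0"
  shows "0 < lam_exp q \<and> (\<exists>k. odd k \<and> q = of_int k / 2 ^ lam_exp q)"
proof -
  obtain k where k: "q = of_int k / 2 ^ lam_exp q" using lam_rep[OF assms(1)] by blast
  have q01: "0 \<le> q" "q < 1" using assms(1) by (auto simp: Lambda_def)
  have pos: "0 < lam_exp q"
  proof (rule ccontr)
    assume "\<not> 0 < lam_exp q"
    then have "q = of_int k" using k by simp
    then have "0 \<le> k" "k < 1" using q01 by auto
    then have "k = 0" by simp
    then show False using \<open>q = of_int k\<close> assms(2) by simp
  qed
  have "odd k"
  proof
    assume "even k"
    then obtain k' where "k = 2 * k'" by blast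
    have "q = of_int k' / 2 ^ (lam_exp q - 1)"
    proof -
      have "(2::rat) ^ lam_exp q = 2 * 2 ^ (lam_exp q - 1)"
        using pos by (metis Suc_diff_1 power_Suc)
      then show ?thesis using k \<open>k = 2 * k'\<close> by simp
    qed
    then have "lam_exp q \<le> lam_exp q - 1" by (rule lam_exp_le)
    then show False using pos by simp
  qed
  then show ?thesis using pos k by blast
qed

lemma lam_abs_eq:
  assumes "q \<in> Lambda" "q \<noteq> 0"
  shows "lam_abs q = 2 ^ lam_exp q"
proof -
  obtain k where k: "odd k" "q = of_int k / 2 ^ lam_exp q" using lam_odd[OF assms] by blast
  define n where "n = lam_exp q"
  have qF: "q = Fract k (2 ^ n)" using k by (simp add: Fract_of_int_quotient n_def)
  have c2: "coprime k 2" using k(1) by simp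
  have cop: "coprime k (2 ^ n)" using c2 by (simp add: coprime_power_right_iff)
  have "quotient_of q = (k, 2 ^ n)"
    unfolding qF quotient_of_Fract using cop by simp
  then have "quotient_of q = (k, 2 ^ lam_exp q)" by (simp add: n_def)
  then show ?thesis using assms(2) by (simp add: lam_abs_def)
qed

lemma flip_at[simp]: "flip m a m = (\<not> a m)"
  by (simp add: flip_def)

lemma flip_other[simp]: "i \<noteq> m \<Longrightarrow> flip m a i = a i"
  by (simp add: flip_def)

lemma z2_res_flip:
  assumes "m < n"
  shows "z2_res (flip m a) n = z2_res a n + (if a m then - (2 ^ m) else 2 ^ m)"
  using assms
proof (induction n)
  case 0
  then show ?case by simp
next
  case (Suc n)
  show ?case
  proof (cases "n = m")
    case True
    have "z2_res (flip m a) m = z2_res a m" by (rule z2_res_cong) simp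
    then show ?thesis using True by (simp add: z2_res_Suc)
  next
    case False
    then have "m < n" using Suc.prems by simp
    have "flip m a n = a n" using False by simp
    then show ?thesis using Suc.IH[OF \<open>m < n\<close>] by (simp add: z2_res_Suc)
  qed
qed

lemma cis_int: "cis (2 * pi * real_of_int t) = 1"
  by (rule cis_multiple_2pi) simp

lemma cis_mpi: "cis (- pi) = -1"
  using cis_cnj[of pi] by simp

lemma chr_cong: "(\<forall>i<lam_exp q. a i = x i) \<Longrightarrow> chr q a = chr q x"
  unfolding chr_def by (simp add: z2_res_cong[of "lam_exp q" a x])

lemma chr_zero[simp]: "chr 0 a = 1"
  by (simp add: chr_def)

lemma chr_flip:
  assumes "q \<in> Lambda" "q \<noteq> 0"
  shows "chr q (flip (lam_exp q - 1) a) = - chr q a"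
proof -
  let ?n = "lam_exp q"
  obtain k where k: "odd k" "q = of_int k / 2 ^ ?n" and pos: "0 < ?n" using lam_odd[OF assms] by blast
  obtain t where t: "k = 2 * t + 1" using k(1) by (metis oddE)
  have rq: "real_of_rat q = real_of_int k / 2 ^ ?n"
    by (subst k(2)) (simp add: of_rat_divide of_rat_power)
  have r: "z2_res (flip (?n - 1) a) ?n = z2_res a ?n + (if a (?n - 1) then - (2 ^ (?n - 1)) else 2 ^ (?n - 1))"
    using pos by (intro z2_res_flip) simp
  have p2: "(2::real) ^ ?n = 2 * 2 ^ (?n - 1)"
    using pos by (metis Suc_diff_1 power_Suc)
  have e: "- 2 * pi * real_of_rat q * (2 ^ (?n - 1)) = - 2 * pi * real_of_int t - pi"
    unfolding rq p2 t by (simp add: field_simps)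
  have cis1: "cis (- 2 * pi * real_of_int t - pi) = -1"
  proof -
    have "cis (- 2 * pi * real_of_int t - pi) = cis (2 * pi * real_of_int (- t)) * cis (- pi)"
      by (simp add: cis_mult)
    also have "\<dots> = -1" by (simp only: cis_int cis_mpi) simp
    finally show ?thesis .
  qed
  have cis2: "cis (- (- 2 * pi * real_of_int t - pi)) = -1"
  proof -
    have "cis (- (- 2 * pi * real_of_int t - pi)) = cis (pi + 2 * pi * real_of_int t)"
      by (simp add: algebra_simps)
    also have "\<dots> = cis pi * cis (2 * pi * real_of_int t)" by (rule cis_mult[symmetric])
    also have "\<dots> = -1" by (simp only: cis_int cis_pi) simp
    finally show ?thesis .
  qed
  show ?thesis
  proof (cases "a (?n - 1)")
    case True
    have "chr q (flip (?n - 1) a) = cis (- 2 * pi * real_of_rat q * real_of_int (z2_res a ?n)) *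
        cis (- (- 2 * pi * real_of_rat q * (2 ^ (?n - 1))))"
      unfolding chr_def r using True by (simp add: cis_mult algebra_simps)
    then show ?thesis unfolding e cis2 chr_def by simp
  next
    case False
    have "chr q (flip (?n - 1) a) = cis (- 2 * pi * real_of_rat q * real_of_int (z2_res a ?n)) *
        cis (- 2 * pi * real_of_rat q * (2 ^ (?n - 1)))"
      unfolding chr_def r using False by (simp add: cis_mult algebra_simps)
    then show ?thesis unfolding e cis1 chr_def by simp
  qed
qed

lemma chr_meas[measurable]: "chr q \<in> borel_measurable haar"
proof -
  have "(\<lambda>a. (\<Sum>i<lam_exp q. if a i then (2::real) ^ i else 0)) \<in> borel_measurable haar"
    by measurable
  then have "(\<lambda>a. cis (- 2 * pi * real_of_rat q * (\<Sum>i<lam_exp q. if a i then (2::real) ^ i else 0)))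
      \<in> borel_measurable haar"
    by (intro borel_measurable_continuous_on[where f="\<lambda>y. cis (- 2 * pi * real_of_rat q * y)"])
       (auto intro!: continuous_intros)
  moreover have "chr q = (\<lambda>a. cis (- 2 * pi * real_of_rat q * (\<Sum>i<lam_exp q. if a i then (2::real) ^ i else 0)))"
  proof (rule ext)
    fix a
    have "real_of_int (z2_res a (lam_exp q)) = (\<Sum>i<lam_exp q. if a i then (2::real) ^ i else 0)"
      unfolding z2_res_def of_int_sum by (intro sum.cong) auto
    then show "chr q a = cis (- 2 * pi * real_of_rat q * (\<Sum>i<lam_exp q. if a i then (2::real) ^ i else 0))"
      unfolding chr_def by simp
  qed
  ultimately show ?thesis by simp
qed

lemma norm_chr[simp]: "norm (chr q a) = 1"
  by (simp add: chr_def)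


lemma integrable_bdd:
  fixes f :: "Z2 \<Rightarrow> 'b::{banach, second_countable_topology}"
  assumes "f \<in> borel_measurable haar" "\<And>a. norm (f a) \<le> B"
  shows "integrable haar f"
  by (rule H.integrable_const_bound[where B=B]) (use assms in auto)

definition cI :: "rat \<Rightarrow> nat \<Rightarrow> real" where
  "cI q j = (if lam_exp q \<le> j then (1/2) ^ j else 0)"

lemma cyl_flip:
  assumes "j \<le> m" shows "flip m a \<in> cyl x j \<longleftrightarrow> a \<in> cyl x j"
proof -
  have "\<forall>i<j. flip m a i = a i" using assms by simp
  then show ?thesis unfolding cyl_def by auto
qed

lemma int_cyl:
  assumes "q \<in> Lambda"
  shows "(\<integral>a. chr q a * indicator (cyl x j) a \<partial>haar) = chr q x * of_real (cI q j)"
proof (cases "lam_exp q \<le> j")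
  case True
  have "(\<lambda>a. chr q a * indicator (cyl x j) a) = (\<lambda>a. chr q x * complex_of_real (indicator (cyl x j) a))"
  proof (rule ext)
    fix a
    show "chr q a * indicator (cyl x j) a = chr q x * complex_of_real (indicator (cyl x j) a)"
    proof (cases "a \<in> cyl x j")
      case True
      then have "\<forall>i<lam_exp q. a i = x i" using \<open>lam_exp q \<le> j\<close> by (auto simp: cyl_def)
      then have "chr q a = chr q x" by (rule chr_cong)
      then show ?thesis using True by simp
    qed simp
  qed
  then have "(\<integral>a. chr q a * indicator (cyl x j) a \<partial>haar) = chr q x * of_real (measure haar (cyl x j))"
    by simp
  then show ?thesis using True by (simp add: measure_cyl cI_def)
next
  case False
  then have q0: "q \<noteq> 0" by (metis le0 lam_exp_zero)
  define m where "m = lam_exp q - 1"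
  have jm: "j \<le> m" using False by (simp add: m_def)
  define g where "g a = chr q a * indicator (cyl x j) a" for a
  have gm: "g \<in> borel_measurable haar" unfolding g_def by measurable
  have "g (flip m a) = - g a" for a
    unfolding g_def m_def using chr_flip[OF assms q0, of a] cyl_flip[OF jm[unfolded m_def], of a x]
    by (simp add: indicator_def)
  then have "(\<integral>a. g (flip m a) \<partial>haar) = (\<integral>a. - g a \<partial>haar)" by simp
  then have "integral\<^sup>L haar g = - integral\<^sup>L haar g"
    using integral_flip[OF gm, of m] by simp
  then have "integral\<^sup>L haar g = 0" by simp
  moreover have "g = (\<lambda>a. chr q a * indicator (cyl x j) a)" by (simp add: g_def fun_eq_iff)
  ultimately show ?thesis using False by (simp add: cI_def)
qed

lemma ind_EE: "(indicator (EE x j) a :: 'b::ring_1) = indicator (cyl x j) a - indicator (cyl x (Suc j)) a"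
  by (auto simp: indicator_def EE_def cyl_def less_Suc_eq)

lemma int_EE:
  assumes "q \<in> Lambda"
  shows "(\<integral>a. chr q a * indicator (EE x j) a \<partial>haar) = chr q x * of_real (cI q j - cI q (Suc j))"
proof -
  have i1: "integrable haar (\<lambda>a. chr q a * indicator (cyl x n) a)" for n
    by (rule integrable_bdd[where B=1]) (auto simp: indicator_def)
  have "(\<lambda>a. chr q a * indicator (EE x j) a) = (\<lambda>a. chr q a * indicator (cyl x j) a - chr q a * indicator (cyl x (Suc j)) a)"
    by (rule ext) (simp add: ind_EE[where 'b=complex] algebra_simps)
  then have "(\<integral>a. chr q a * indicator (EE x j) a \<partial>haar) =
      (\<integral>a. chr q a * indicator (cyl x j) a \<partial>haar) - (\<integral>a. chr q a * indicator (cyl x (Suc j)) a \<partial>haar)"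
    using i1 by simp
  also have "\<dots> = chr q x * of_real (cI q j - cI q (Suc j))"
    unfolding int_cyl[OF assms] by (simp add: algebra_simps)
  finally show ?thesis .
qed



definition rr :: "real \<Rightarrow> real" where "rr \<beta> = 2 powr (- \<beta>)"

lemma rr_pos: "0 < rr \<beta>" by (simp add: rr_def)

lemma rr_lt1: "0 < \<beta> \<Longrightarrow> rr \<beta> < 1"
  unfolding rr_def by (simp add: powr_less_one)

lemma half_pow_powr: "(1/2::real) ^ j = 2 powr (- real j)"
  by (simp add: powr_minus powr_realpow power_one_over inverse_eq_divide)

lemma rr_pow: "rr \<beta> ^ j = 2 powr (- \<beta> * real j)"
  unfolding rr_def by (simp add: powr_realpow[symmetric] powr_powr)

lemma Kc_half: "Kc \<beta> j * (1/2) ^ j = 2 * (1 - rr \<beta>) * rr \<beta> ^ j"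
proof -
  have z: "2 / zeta2 \<beta> = 2 * (1 - rr \<beta>)" by (simp add: zeta2_def rr_def)
  have a: "(2 powr (- real j)) powr (\<beta> - 1) = 2 powr (- real j * (\<beta> - 1))" by (simp add: powr_powr)
  have b: "2 powr (- real j * (\<beta> - 1)) * 2 powr (- real j) = 2 powr (- real j * (\<beta> - 1) + - real j)"
    by (rule powr_add[symmetric])
  have "((1/2::real) ^ j) powr (\<beta> - 1) * (1/2) ^ j = 2 powr (- real j * (\<beta> - 1) + - real j)"
    unfolding half_pow_powr a b ..
  also have "\<dots> = rr \<beta> ^ j" unfolding rr_pow by (simp add: algebra_simps)
  finally show ?thesis unfolding Kc_def z by (simp add: mult.assoc)
qed

lemma Kc_half_Suc: "Kc \<beta> j * (1/2) ^ Suc j = (1 - rr \<beta>) * rr \<beta> ^ j"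
  using Kc_half[of \<beta> j] by simp

lemma Kc_nonneg: "0 < \<beta> \<Longrightarrow> 0 \<le> Kc \<beta> j"
proof -
  assume "0 < \<beta>"
  then have "rr \<beta> < 1" by (rule rr_lt1)
  moreover have "2 / zeta2 \<beta> = 2 * (1 - rr \<beta>)" by (simp add: zeta2_def rr_def)
  ultimately show ?thesis unfolding Kc_def by simp
qed

lemma geo_tail:
  fixes r c :: real
  assumes "\<bar>r\<bar> < 1"
  shows "(\<lambda>j. if n \<le> j then c * r ^ j else 0) sums (c * r ^ n / (1 - r))"
proof -
  let ?f = "\<lambda>j. if n \<le> j then c * r ^ j else 0"
  have "(\<lambda>i. c * r ^ n * r ^ i) sums (c * r ^ n * (1 / (1 - r)))"
    by (intro sums_mult geometric_sums) (use assms in simp)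
  moreover have "(\<lambda>i. ?f (i + n)) = (\<lambda>i. c * r ^ n * r ^ i)"
    by (simp add: power_add fun_eq_iff)
  ultimately have "(\<lambda>i. ?f (i + n)) sums (c * r ^ n / (1 - r))" by simp
  moreover have "sum ?f {..<n} = 0" by simp
  ultimately show ?thesis using sums_iff_shift[of ?f n] by simp
qed



lemma kern_sums: "(\<lambda>j. Kc \<beta> j * indicator (EE x j) a) sums riesz_kernel \<beta> (z2_sub a x)"
proof -
  have "summable (\<lambda>j. Kc \<beta> j * indicator (EE x j) a)"
  proof (cases "a = x")
    case True
    then have "(\<lambda>j. Kc \<beta> j * indicator (EE x j) a) = (\<lambda>j. 0)" by (simp add: EE_def fun_eq_iff)
    then show ?thesis by simp
  next
    case False
    let ?d = "LEAST i. a i \<noteq> x i"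
    have "(\<lambda>j. Kc \<beta> j * indicator (EE x j) a) = (\<lambda>j. if j = ?d then Kc \<beta> j else 0)"
      using least_diff[OF False] by (auto simp: EE_def indicator_def fun_eq_iff)
    then show ?thesis using sums_summable[OF sums_single[of ?d "Kc \<beta>"]] by simp
  qed
  then show ?thesis unfolding kern_sum[of \<beta> a x] by (rule summable_sums)
qed

definition mv :: "real \<Rightarrow> nat \<Rightarrow> real" where
  "mv \<beta> n = (if n = 0 then 1 else 2 * rr \<beta> ^ n - rr \<beta> ^ (n - 1))"

lemma mv_sums:
  assumes b: "0 < \<beta>"
  shows "(\<lambda>j. Kc \<beta> j * (cI q j - cI q (Suc j))) sums mv \<beta> (lam_exp q)"
proof -
  let ?n = "lam_exp q" and ?r = "rr \<beta>"
  have r1: "\<bar>?r\<bar> < 1" using rr_lt1[OF b] rr_pos[of \<beta>] by simp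
  have r1': "1 - ?r \<noteq> 0" using rr_lt1[OF b] by simp
  have e1: "Kc \<beta> j * cI q j = (if ?n \<le> j then 2 * (1 - ?r) * ?r ^ j else 0)" for j
    by (simp add: cI_def Kc_half)
  have e2: "Kc \<beta> j * cI q (Suc j) = (if ?n \<le> Suc j then (1 - ?r) * ?r ^ j else 0)" for j
    by (simp add: cI_def Kc_half_Suc del: power_Suc)
  have v1: "2 * (1 - ?r) * ?r ^ ?n / (1 - ?r) = 2 * ?r ^ ?n" using r1' by (simp add: field_simps)
  have s1: "(\<lambda>j. Kc \<beta> j * cI q j) sums (2 * ?r ^ ?n)"
    using geo_tail[OF r1, of ?n "2 * (1 - ?r)"] unfolding e1 v1 .
  have s2: "(\<lambda>j. Kc \<beta> j * cI q (Suc j)) sums (if ?n = 0 then 1 else ?r ^ (?n - 1))"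
  proof (cases "?n = 0")
    case True
    have f: "(\<lambda>j. Kc \<beta> j * cI q (Suc j)) = (\<lambda>j. if 0 \<le> j then (1 - ?r) * ?r ^ j else 0)"
      by (rule ext) (simp only: e2 True le0 if_True)
    have v: "(1 - ?r) * ?r ^ 0 / (1 - ?r) = 1" using r1' by simp
    show ?thesis using geo_tail[OF r1, of 0 "1 - ?r"] unfolding f v using True by simp
  next
    case False
    have iff: "(?n \<le> Suc j) = (?n - 1 \<le> j)" for j using False by arith
    have f: "(\<lambda>j. Kc \<beta> j * cI q (Suc j)) = (\<lambda>j. if ?n - 1 \<le> j then (1 - ?r) * ?r ^ j else 0)"
      by (rule ext) (simp only: e2 iff)
    have v: "(1 - ?r) * ?r ^ (?n - 1) / (1 - ?r) = ?r ^ (?n - 1)" using r1' by simp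
    show ?thesis using geo_tail[OF r1, of "?n - 1" "1 - ?r"] unfolding f v using False by simp
  qed
  have "(\<lambda>j. Kc \<beta> j * cI q j - Kc \<beta> j * cI q (Suc j)) sums (2 * ?r ^ ?n - (if ?n = 0 then 1 else ?r ^ (?n - 1)))"
    by (rule sums_diff[OF s1 s2])
  moreover have "2 * ?r ^ ?n - (if ?n = 0 then 1 else ?r ^ (?n - 1)) = mv \<beta> ?n" by (simp add: mv_def)
  moreover have "(\<lambda>j. Kc \<beta> j * cI q j - Kc \<beta> j * cI q (Suc j)) = (\<lambda>j. Kc \<beta> j * (cI q j - cI q (Suc j)))"
    by (simp add: right_diff_distrib fun_eq_iff)
  ultimately show ?thesis by simp
qed

lemma eigen:
  assumes q: "q \<in> Lambda" and b: "0 < \<beta>"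
  shows "integrable haar (\<lambda>a. chr q a * of_real (riesz_kernel \<beta> (z2_sub a x)))"
    and "(\<integral>a. chr q a * of_real (riesz_kernel \<beta> (z2_sub a x)) \<partial>haar) = chr q x * of_real (mv \<beta> (lam_exp q))"
proof -
  define f where "f j a = chr q a * of_real (Kc \<beta> j * indicator (EE x j) a)" for j a
  have Kn: "0 \<le> Kc \<beta> j" for j using b by (rule Kc_nonneg)
  have nf: "norm (f j a) = Kc \<beta> j * indicator (EE x j) a" for j a
    using Kn by (simp add: f_def norm_mult)
  have fm: "f j \<in> borel_measurable haar" for j unfolding f_def by measurable
  have fi: "integrable haar (f j)" for j
    by (rule integrable_bdd[OF fm, where B="Kc \<beta> j"]) (simp add: nf indicator_def Kn)
  have su: "AE a in haar. summable (\<lambda>j. norm (f j a))"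
    unfolding nf by (intro AE_I2) (rule sums_summable[OF kern_sums])
  have inorm: "(\<integral>a. norm (f j a) \<partial>haar) = (1 - rr \<beta>) * rr \<beta> ^ j" for j
  proof -
    have "(\<integral>a. norm (f j a) \<partial>haar) = Kc \<beta> j * measure haar (EE x j)"
      unfolding nf by simp
    then show ?thesis by (simp add: measure_EE Kc_half_Suc del: power_Suc)
  qed
  have r1: "\<bar>rr \<beta>\<bar> < 1" using rr_lt1[OF b] rr_pos[of \<beta>] by simp
  have sn: "summable (\<lambda>j. (\<integral>a. norm (f j a) \<partial>haar))"
    unfolding inorm by (intro summable_mult summable_geometric) (simp add: r1)
  have sumf: "(\<Sum>j. f j a) = chr q a * of_real (riesz_kernel \<beta> (z2_sub a x))" for a
  proof -
    have "(\<lambda>j. f j a) sums (chr q a * of_real (riesz_kernel \<beta> (z2_sub a x)))"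
      unfolding f_def by (intro sums_mult sums_of_real kern_sums)
    then show ?thesis by (rule sums_unique[symmetric])
  qed
  have intf: "integral\<^sup>L haar (f j) = chr q x * of_real (Kc \<beta> j * (cI q j - cI q (Suc j)))" for j
  proof -
    have "f j = (\<lambda>a. of_real (Kc \<beta> j) * (chr q a * indicator (EE x j) a))"
      by (simp add: f_def fun_eq_iff indicator_def)
    then have "integral\<^sup>L haar (f j) = of_real (Kc \<beta> j) * (\<integral>a. chr q a * indicator (EE x j) a \<partial>haar)"
      by simp
    also have "\<dots> = chr q x * of_real (Kc \<beta> j * (cI q j - cI q (Suc j)))"
      unfolding int_EE[OF q] by (simp add: algebra_simps)
    finally show ?thesis .
  qed
  have "integrable haar (\<lambda>a. \<Sum>j. f j a)"
    by (rule integrable_suminf[OF fi su sn])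
  then show "integrable haar (\<lambda>a. chr q a * of_real (riesz_kernel \<beta> (z2_sub a x)))"
    unfolding sumf .
  have "(\<integral>a. (\<Sum>j. f j a) \<partial>haar) = (\<Sum>j. integral\<^sup>L haar (f j))"
    by (rule integral_suminf[OF fi su sn])
  also have "\<dots> = chr q x * of_real (mv \<beta> (lam_exp q))"
  proof -
    have "(\<lambda>j. integral\<^sup>L haar (f j)) sums (chr q x * of_real (mv \<beta> (lam_exp q)))"
      unfolding intf by (intro sums_mult sums_of_real mv_sums b)
    then show ?thesis by (rule sums_unique[symmetric])
  qed
  finally show "(\<integral>a. chr q a * of_real (riesz_kernel \<beta> (z2_sub a x)) \<partial>haar) = chr q x * of_real (mv \<beta> (lam_exp q))"
    unfolding sumf .
qed



definition trunc :: "nat \<Rightarrow> Z2 \<Rightarrow> Z2" where "trunc N x = (\<lambda>i. if i < N then x i else False)"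

lemma finite_trunc: "finite (range (trunc N))"
proof -
  have "inj_on (\<lambda>g. {i. g i}) (range (trunc N))"
    by (rule inj_onI) (auto simp: trunc_def fun_eq_iff)
  moreover have "(\<lambda>g. {i. g i}) ` range (trunc N) \<subseteq> Pow {..<N}"
    by (auto simp: trunc_def split: if_splits)
  ultimately show ?thesis
    by (meson finite_Pow_iff finite_lessThan finite_subset inj_on_finite)
qed

lemma lc_props:
  fixes f :: "Z2 \<Rightarrow> 'b::{banach, second_countable_topology}"
  assumes "locally_constant f"
  shows "\<exists>B. (\<forall>x. norm (f x) \<le> B) \<and> f \<in> borel_measurable haar"
proof -
  obtain N where N: "\<And>x y. (\<forall>i<N. x i = y i) \<Longrightarrow> f x = f y"
    using lc_uniform[OF assms] by blast
  let ?G = "range (trunc N)"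
  have ft: "f x = f (trunc N x)" for x by (rule N) (simp add: trunc_def)
  have fin: "finite ?G" by (rule finite_trunc)
  define B where "B = Max ((\<lambda>g. norm (f g)) ` ?G)"
  have bd: "norm (f x) \<le> B" for x
  proof -
    have "norm (f (trunc N x)) \<le> B" unfolding B_def by (rule Max_ge) (use fin in auto)
    then show ?thesis using ft[of x] by simp
  qed
  have ind: "indicator (cyl g N) x = (if g = trunc N x then 1 else (0::real))" if gG: "g \<in> ?G" for g x
  proof -
    obtain y where g: "g = trunc N y" using gG by blast
    have "x \<in> cyl g N \<longleftrightarrow> g = trunc N x"
      unfolding g cyl_def trunc_def by (auto simp: fun_eq_iff)
    then show ?thesis by (simp add: indicator_def)
  qed
  have "f = (\<lambda>x. \<Sum>g\<in>?G. indicator (cyl g N) x *\<^sub>R f g)"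
  proof (rule ext)
    fix x
    have "(\<Sum>g\<in>?G. indicator (cyl g N) x *\<^sub>R f g) = (\<Sum>g\<in>?G. if g = trunc N x then f g else 0)"
      by (intro sum.cong) (auto simp: ind)
    also have "\<dots> = f (trunc N x)" using fin by (simp add: sum.delta')
    finally show "f x = (\<Sum>g\<in>?G. indicator (cyl g N) x *\<^sub>R f g)" using ft[of x] by simp
  qed
  moreover have "(\<lambda>x. \<Sum>g\<in>?G. indicator (cyl g N) x *\<^sub>R f g) \<in> borel_measurable haar"
    by measurable
  ultimately have "f \<in> borel_measurable haar" by simp
  then show ?thesis using bd by blast
qed



interpretation HH: pair_sigma_finite haar haar
  by (simp add: pair_sigma_finite_def prob_space_imp_sigma_finite prob_haar)

lemma kern_nonneg: "0 < \<beta> \<Longrightarrow> 0 \<le> riesz_kernel \<beta> (z2_sub a x)"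
proof -
  assume b: "0 < \<beta>"
  have "0 \<le> (\<Sum>j. Kc \<beta> j * indicator (EE x j) a)"
    by (rule suminf_nonneg[OF sums_summable[OF kern_sums]]) (simp add: Kc_nonneg[OF b])
  then show ?thesis unfolding kern_sum .
qed

lemma kern_int:
  assumes b: "0 < \<beta>"
  shows "integrable haar (\<lambda>a. riesz_kernel \<beta> (z2_sub a x))"
    and "(\<integral>a. riesz_kernel \<beta> (z2_sub a x) \<partial>haar) = 1"
proof -
  have z: "(0::rat) \<in> Lambda" by (auto simp: Lambda_def intro!: exI[of _ 0])
  have i: "integrable haar (\<lambda>a. complex_of_real (riesz_kernel \<beta> (z2_sub a x)))"
    using eigen(1)[OF z b, of x] by simp
  show "integrable haar (\<lambda>a. riesz_kernel \<beta> (z2_sub a x))"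
    using integrable_Re[OF i] by simp
  have "(\<integral>a. complex_of_real (riesz_kernel \<beta> (z2_sub a x)) \<partial>haar) = 1"
    using eigen(2)[OF z b, of x] by (simp add: mv_def)
  then show "(\<integral>a. riesz_kernel \<beta> (z2_sub a x) \<partial>haar) = 1"
    by simp
qed

lemma kern_meas2: "(\<lambda>p. riesz_kernel \<beta> (z2_sub (fst p) (snd p))) \<in> borel_measurable (haar \<Otimes>\<^sub>M haar)"
proof -
  have m: "Measurable.pred (haar \<Otimes>\<^sub>M haar) (\<lambda>p. (\<forall>i<j. fst p i = snd p i) \<and> fst p j \<noteq> snd p j)" for j
    by (rule pair_meas)
  have "(\<lambda>p. \<Sum>j. (if (\<forall>i<j. fst p i = snd p i) \<and> fst p j \<noteq> snd p j then Kc \<beta> j else 0))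
     \<in> borel_measurable (haar \<Otimes>\<^sub>M haar)"
    using m by measurable
  moreover have "(\<lambda>p. riesz_kernel \<beta> (z2_sub (fst p) (snd p))) =
      (\<lambda>p. \<Sum>j. (if (\<forall>i<j. fst p i = snd p i) \<and> fst p j \<noteq> snd p j then Kc \<beta> j else 0))"
  proof (rule ext)
    fix p :: "Z2 \<times> Z2"
    show "riesz_kernel \<beta> (z2_sub (fst p) (snd p)) =
      (\<Sum>j. (if (\<forall>i<j. fst p i = snd p i) \<and> fst p j \<noteq> snd p j then Kc \<beta> j else 0))"
      unfolding kern_sum by (intro suminf_cong) (simp add: indicator_def EE_def)
  qed
  ultimately show ?thesis by simp
qed


lemma main_id:
  assumes lc: "locally_constant f" and q: "q \<in> Lambda" and b: "0 < \<beta>"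
  shows "fourier (conv (riesz_kernel \<beta>) f) q = of_real (mv \<beta> (lam_exp q)) * fourier f q"
proof -
  obtain B where B: "\<forall>x. norm (f x) \<le> B" and fm: "f \<in> borel_measurable haar"
    using lc_props[OF lc] by blast
  define k where "k a x = riesz_kernel \<beta> (z2_sub a x)" for a x
  define h where "h a x = chr q a * of_real (k a x) * f x" for a x
  have km: "(\<lambda>p. k (fst p) (snd p)) \<in> borel_measurable (haar \<Otimes>\<^sub>M haar)"
    unfolding k_def by (rule kern_meas2)
  have kn: "0 \<le> k a x" for a x unfolding k_def using b by (rule kern_nonneg)
  have fm2: "(\<lambda>p. f (snd p)) \<in> borel_measurable (haar \<Otimes>\<^sub>M haar)"
    using fm by measurable
  have cm2: "(\<lambda>p. chr q (fst p)) \<in> borel_measurable (haar \<Otimes>\<^sub>M haar)"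
    by measurable
  have hm: "(\<lambda>p. h (fst p) (snd p)) \<in> borel_measurable (haar \<Otimes>\<^sub>M haar)"
    unfolding h_def using km fm2 cm2 by measurable
  have inner: "(\<integral>\<^sup>+a. ennreal (k a x) \<partial>haar) = 1" for x
  proof -
    have "(\<integral>\<^sup>+a. ennreal (k a x) \<partial>haar) = ennreal (\<integral>a. k a x \<partial>haar)"
      by (rule nn_integral_eq_integral) (use kern_int(1)[OF b, of x] kn in \<open>auto simp: k_def\<close>)
    then show ?thesis using kern_int(2)[OF b, of x] by (simp add: k_def)
  qed
  have ki: "integrable (haar \<Otimes>\<^sub>M haar) (\<lambda>p. k (fst p) (snd p))"
  proof (rule integrableI_nonneg)
    show "(\<lambda>p. k (fst p) (snd p)) \<in> borel_measurable (haar \<Otimes>\<^sub>M haar)" by (rule km)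
    show "AE p in haar \<Otimes>\<^sub>M haar. 0 \<le> k (fst p) (snd p)" by (simp add: kn)
    have "(\<integral>\<^sup>+p. ennreal (k (fst p) (snd p)) \<partial>(haar \<Otimes>\<^sub>M haar))
        = (\<integral>\<^sup>+x. (\<integral>\<^sup>+a. ennreal (k a x) \<partial>haar) \<partial>haar)"
      using HH.nn_integral_snd[of "\<lambda>p. ennreal (k (fst p) (snd p))"] km by simp
    also have "\<dots> = 1" using H.emeasure_space_1 by (simp add: inner)
    finally show "(\<integral>\<^sup>+p. ennreal (k (fst p) (snd p)) \<partial>(haar \<Otimes>\<^sub>M haar)) < \<infinity>" by simp
  qed
  have B0: "0 \<le> B" using B norm_ge_zero order_trans by blast
  have hi: "integrable (haar \<Otimes>\<^sub>M haar) (\<lambda>p. h (fst p) (snd p))"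
  proof (rule Bochner_Integration.integrable_bound)
    show "integrable (haar \<Otimes>\<^sub>M haar) (\<lambda>p. B * k (fst p) (snd p))"
      using ki by (rule integrable_mult_right)
    show "(\<lambda>p. h (fst p) (snd p)) \<in> borel_measurable (haar \<Otimes>\<^sub>M haar)" by (rule hm)
    show "AE p in haar \<Otimes>\<^sub>M haar. norm (h (fst p) (snd p)) \<le> norm (B * k (fst p) (snd p))"
    proof (rule AE_I2)
      fix p :: "Z2 \<times> Z2"
      have "norm (h (fst p) (snd p)) = k (fst p) (snd p) * norm (f (snd p))"
        using kn by (simp add: h_def norm_mult)
      also have "\<dots> \<le> k (fst p) (snd p) * B" using B kn by (intro mult_left_mono) auto
      finally show "norm (h (fst p) (snd p)) \<le> norm (B * k (fst p) (snd p))"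
        using kn B0 by (simp add: mult.commute)
    qed
  qed
  have hi': "integrable (haar \<Otimes>\<^sub>M haar) (case_prod h)"
    using hi by (simp add: split_beta')
  have fub: "(\<integral>x. (\<integral>a. h a x \<partial>haar) \<partial>haar) = (\<integral>a. (\<integral>x. h a x \<partial>haar) \<partial>haar)"
    by (rule HH.Fubini_integral[OF hi'])
  have s1: "chr q a * conv (riesz_kernel \<beta>) f a = (\<integral>x. h a x \<partial>haar)" for a
    unfolding conv_def h_def k_def by (simp add: mult.assoc)
  have s2: "(\<integral>a. h a x \<partial>haar) = chr q x * of_real (mv \<beta> (lam_exp q)) * f x" for x
  proof -
    have "(\<integral>a. h a x \<partial>haar) = (\<integral>a. chr q a * of_real (k a x) \<partial>haar) * f x"
      unfolding h_def by simp
    then show ?thesis using eigen(2)[OF q b, of x] by (simp add: k_def)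
  qed
  have "fourier (conv (riesz_kernel \<beta>) f) q = (\<integral>a. (\<integral>x. h a x \<partial>haar) \<partial>haar)"
    using q by (simp add: fourier_def s1)
  also have "\<dots> = (\<integral>x. chr q x * of_real (mv \<beta> (lam_exp q)) * f x \<partial>haar)"
    unfolding fub[symmetric] s2 ..
  also have "\<dots> = (\<integral>x. of_real (mv \<beta> (lam_exp q)) * (chr q x * f x) \<partial>haar)"
    by (rule Bochner_Integration.integral_cong) (simp_all add: algebra_simps)
  also have "\<dots> = of_real (mv \<beta> (lam_exp q)) * (\<integral>x. chr q x * f x \<partial>haar)"
    by (rule integral_mult_right_zero)
  also have "\<dots> = of_real (mv \<beta> (lam_exp q)) * fourier f q"
    using q by (simp add: fourier_def)
  finally show ?thesis .
qed



definition wt :: "real \<Rightarrow> rat \<Rightarrow> real" where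
  "wt t q = (1 + lam_abs q) powr (2 * t)"

lemma lam_abs_nonneg: "0 \<le> lam_abs q"
  unfolding lam_abs_def using quotient_of_denom_pos'[of q] by simp

lemma wt_pos: "0 < wt t q"
  unfolding wt_def using lam_abs_nonneg[of q] by simp

lemma H_space_iff: "c \<in> H_space t \<longleftrightarrow> (\<forall>q. q \<notin> Lambda \<longrightarrow> c q = 0) \<and>
    (\<lambda>q. wt t q * (cmod (c q))\<^sup>2) summable_on Lambda"
  by (simp add: H_space_def wt_def)

lemma H_norm_eq: "H_norm t c = sqrt (\<Sum>\<^sub>\<infinity>q\<in>Lambda. wt t q * (cmod (c q))\<^sup>2)"
  by (simp add: H_norm_def wt_def)

lemma sq_diff_le: "(cmod (a - b))\<^sup>2 \<le> 2 * (cmod a)\<^sup>2 + 2 * (cmod b)\<^sup>2"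
proof -
  have "cmod (a - b) \<le> cmod a + cmod b" by (rule norm_triangle_ineq4)
  then have "(cmod (a - b))\<^sup>2 \<le> (cmod a + cmod b)\<^sup>2" by (simp add: power_mono)
  also have "\<dots> \<le> 2 * (cmod a)\<^sup>2 + 2 * (cmod b)\<^sup>2"
    using sum_squares_ge_zero[of "cmod a - cmod b" 0] by (simp add: power2_eq_square algebra_simps)
  finally show ?thesis .
qed

lemma H_sub:
  assumes "c \<in> H_space t" "d \<in> H_space t"
  shows "(\<lambda>q. d q - c q) \<in> H_space t"
proof -
  have sc: "(\<lambda>q. wt t q * (cmod (c q))\<^sup>2) summable_on Lambda" and sd: "(\<lambda>q. wt t q * (cmod (d q))\<^sup>2) summable_on Lambda"
    using assms by (auto simp: H_space_iff)
  have "(\<lambda>q. 2 * (wt t q * (cmod (d q))\<^sup>2) + 2 * (wt t q * (cmod (c q))\<^sup>2)) summable_on Lambda"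
    by (intro summable_on_add summable_on_cmult_right sc sd)
  then have "(\<lambda>q. wt t q * (cmod (d q - c q))\<^sup>2) summable_on Lambda"
  proof (rule summable_on_comparison_test)
    fix q
    have "wt t q * (cmod (d q - c q))\<^sup>2 \<le> wt t q * (2 * (cmod (d q))\<^sup>2 + 2 * (cmod (c q))\<^sup>2)"
      using wt_pos[of t q] sq_diff_le[of "d q" "c q"] by (intro mult_left_mono) auto
    then show "wt t q * (cmod (d q - c q))\<^sup>2 \<le> 2 * (wt t q * (cmod (d q))\<^sup>2) + 2 * (wt t q * (cmod (c q))\<^sup>2)"
      by (simp add: algebra_simps)
    show "0 \<le> wt t q * (cmod (d q - c q))\<^sup>2" using wt_pos[of t q] by simp
  qed
  then show ?thesis using assms by (auto simp: H_space_iff)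
qed

locale multop =
  fixes m :: "rat \<Rightarrow> real" and s c1 c2 :: real
  assumes c1: "0 < c1" and c2: "0 < c2"
  and U: "\<And>q. q \<in> Lambda \<Longrightarrow> wt s q * (m q)\<^sup>2 \<le> c2 * wt (-s) q"
  and L: "\<And>q. q \<in> Lambda \<Longrightarrow> c1 * wt (-s) q \<le> wt s q * (m q)\<^sup>2"
begin

definition T :: "(rat \<Rightarrow> complex) \<Rightarrow> rat \<Rightarrow> complex" where
  "T c q = complex_of_real (m q) * c q"

lemma WT: "wt s q * (cmod (T c q))\<^sup>2 = (wt s q * (m q)\<^sup>2) * (cmod (c q))\<^sup>2"
  by (simp add: T_def norm_mult power_mult_distrib)

lemma WT_le: "q \<in> Lambda \<Longrightarrow> wt s q * (cmod (T c q))\<^sup>2 \<le> c2 * (wt (-s) q * (cmod (c q))\<^sup>2)"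
  unfolding WT using U[of q] by (simp add: mult.assoc[symmetric] mult_right_mono)

lemma T_maps:
  assumes "c \<in> H_space (-s)" shows "T c \<in> H_space s"
proof -
  have sc: "(\<lambda>q. wt (-s) q * (cmod (c q))\<^sup>2) summable_on Lambda" using assms by (simp add: H_space_iff)
  have "(\<lambda>q. c2 * (wt (-s) q * (cmod (c q))\<^sup>2)) summable_on Lambda"
    by (rule summable_on_cmult_right[OF sc])
  then have "(\<lambda>q. wt s q * (cmod (T c q))\<^sup>2) summable_on Lambda"
    by (rule summable_on_comparison_test) (auto simp: WT_le wt_pos less_imp_le)
  then show ?thesis using assms by (auto simp: H_space_iff T_def)
qed

lemma T_norm:
  assumes "c \<in> H_space (-s)" shows "H_norm s (T c) \<le> sqrt c2 * H_norm (-s) c"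
proof -
  have sc: "(\<lambda>q. wt (-s) q * (cmod (c q))\<^sup>2) summable_on Lambda" using assms by (simp add: H_space_iff)
  have sT: "(\<lambda>q. wt s q * (cmod (T c q))\<^sup>2) summable_on Lambda"
    using T_maps[OF assms] by (simp add: H_space_iff)
  have "(\<Sum>\<^sub>\<infinity>q\<in>Lambda. wt s q * (cmod (T c q))\<^sup>2) \<le> (\<Sum>\<^sub>\<infinity>q\<in>Lambda. c2 * (wt (-s) q * (cmod (c q))\<^sup>2))"
    by (rule infsum_mono[OF sT summable_on_cmult_right[OF sc]]) (rule WT_le)
  also have "\<dots> = c2 * (\<Sum>\<^sub>\<infinity>q\<in>Lambda. wt (-s) q * (cmod (c q))\<^sup>2)"
    by (rule infsum_cmult_right) (use sc in simp)
  finally have "sqrt (\<Sum>\<^sub>\<infinity>q\<in>Lambda. wt s q * (cmod (T c q))\<^sup>2) \<le> sqrt (c2 * (\<Sum>\<^sub>\<infinity>q\<in>Lambda. wt (-s) q * (cmod (c q))\<^sup>2))"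
    by (rule real_sqrt_le_mono)
  then show ?thesis unfolding H_norm_eq by (simp add: real_sqrt_mult)
qed

lemma T_diff: "(\<lambda>q. T d q - T c q) = T (\<lambda>q. d q - c q)"
  by (simp add: T_def fun_eq_iff algebra_simps)

lemma T_cont:
  assumes "c \<in> H_space (-s)" "0 < \<epsilon>"
  shows "\<exists>\<delta>>0. \<forall>d\<in>H_space (- s). H_norm (- s) (\<lambda>q. d q - c q) < \<delta> \<longrightarrow> H_norm s (\<lambda>q. T d q - T c q) < \<epsilon>"
proof (intro exI conjI ballI impI)
  let ?K = "sqrt c2 + 1"
  have K: "0 < ?K" using real_sqrt_ge_zero[of c2] c2 by linarith
  show "0 < \<epsilon> / ?K" using assms(2) K by simp
  fix d assume d: "d \<in> H_space (-s)" and lt: "H_norm (- s) (\<lambda>q. d q - c q) < \<epsilon> / ?K"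
  have dc: "(\<lambda>q. d q - c q) \<in> H_space (-s)" by (rule H_sub[OF assms(1) d])
  have n0: "0 \<le> H_norm (- s) (\<lambda>q. d q - c q)"
    unfolding H_norm_eq by (intro real_sqrt_ge_zero infsum_nonneg) (simp add: wt_pos less_imp_le)
  have "H_norm s (\<lambda>q. T d q - T c q) \<le> sqrt c2 * H_norm (- s) (\<lambda>q. d q - c q)"
    unfolding T_diff by (rule T_norm[OF dc])
  also have "\<dots> \<le> ?K * H_norm (- s) (\<lambda>q. d q - c q)" using n0 by (simp add: algebra_simps)
  also have "\<dots> < ?K * (\<epsilon> / ?K)" using lt K by (intro mult_strict_left_mono) auto
  also have "\<dots> = \<epsilon>" using K by simp
  finally show "H_norm s (\<lambda>q. T d q - T c q) < \<epsilon>" .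
qed

lemma m_nz: "q \<in> Lambda \<Longrightarrow> m q \<noteq> 0"
proof
  assume q: "q \<in> Lambda" and "m q = 0"
  then have "c1 * wt (-s) q \<le> 0" using L[OF q] by simp
  moreover have "0 < c1 * wt (-s) q" using c1 wt_pos[of "-s" q] by simp
  ultimately show False by simp
qed

lemma T_onto: "T ` H_space (-s) = H_space s"
proof
  show "T ` H_space (-s) \<subseteq> H_space s" using T_maps by blast
  show "H_space s \<subseteq> T ` H_space (-s)"
  proof
    fix e assume e: "e \<in> H_space s"
    have e0: "\<forall>q. q \<notin> Lambda \<longrightarrow> e q = 0" and se: "(\<lambda>q. wt s q * (cmod (e q))\<^sup>2) summable_on Lambda"
      using e by (auto simp: H_space_iff)
    define c where "c q = (if q \<in> Lambda then e q / complex_of_real (m q) else 0)" for q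
    have Tc: "T c = e"
    proof
      fix q show "T c q = e q"
        using e0 m_nz[of q] by (cases "q \<in> Lambda") (auto simp: T_def c_def)
    qed
    have "(\<lambda>q. (1 / c1) * (wt s q * (cmod (e q))\<^sup>2)) summable_on Lambda"
      by (rule summable_on_cmult_right[OF se])
    then have "(\<lambda>q. wt (-s) q * (cmod (c q))\<^sup>2) summable_on Lambda"
    proof (rule summable_on_comparison_test)
      fix q assume q: "q \<in> Lambda"
      have mq: "0 < (m q)\<^sup>2" using m_nz[OF q] by simp
      have "wt (-s) q * (cmod (c q))\<^sup>2 = wt (-s) q * (cmod (e q))\<^sup>2 / (m q)\<^sup>2"
        using q by (simp add: c_def norm_divide power_divide)
      also have "\<dots> \<le> (1 / c1) * (wt s q * (cmod (e q))\<^sup>2)"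
      proof -
        have "c1 * wt (-s) q \<le> wt s q * (m q)\<^sup>2" by (rule L[OF q])
        then have "wt (-s) q / (m q)\<^sup>2 \<le> wt s q / c1"
          using c1 mq by (simp add: field_simps)
        then have "wt (-s) q / (m q)\<^sup>2 * (cmod (e q))\<^sup>2 \<le> wt s q / c1 * (cmod (e q))\<^sup>2"
          by (rule mult_right_mono) simp
        then show ?thesis by (simp add: field_simps)
      qed
      finally show "wt (-s) q * (cmod (c q))\<^sup>2 \<le> (1 / c1) * (wt s q * (cmod (e q))\<^sup>2)" .
      show "0 \<le> wt (-s) q * (cmod (c q))\<^sup>2" using wt_pos[of "-s" q] by simp
    qed
    then have "c \<in> H_space (-s)" by (auto simp: H_space_iff c_def)
    then show "e \<in> T ` H_space (-s)" using Tc by blast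
  qed
qed

end


lemma mv_formula:
  assumes q: "q \<in> Lambda" "q \<noteq> 0" and b: "0 < \<beta>"
  shows "mv \<beta> (lam_exp q) = (2 - 2 powr \<beta>) * lam_abs q powr (- \<beta>)"
proof -
  let ?n = "lam_exp q"
  have n: "0 < ?n" using lam_odd[OF q] by blast
  have A: "lam_abs q = 2 ^ ?n" by (rule lam_abs_eq[OF q])
  have Ap: "lam_abs q powr (- \<beta>) = rr \<beta> ^ ?n"
    unfolding A rr_pow by (simp add: powr_realpow[symmetric] powr_powr mult.commute)
  have r: "rr \<beta> ^ (?n - 1) = rr \<beta> ^ ?n * 2 powr \<beta>"
  proof -
    have "rr \<beta> ^ ?n = rr \<beta> ^ (?n - 1) * rr \<beta>" using n by (metis Suc_diff_1 power_Suc2)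
    moreover have "rr \<beta> * 2 powr \<beta> = 1" by (simp add: rr_def powr_add[symmetric])
    ultimately show ?thesis by (metis mult.assoc mult.right_neutral)
  qed
  show ?thesis using n unfolding mv_def Ap r by (simp add: algebra_simps)
qed

lemma bounds:
  assumes b: "0 < \<beta>" "\<beta> < 1" and q: "q \<in> Lambda"
  defines "C \<equiv> 2 - 2 powr \<beta>"
  shows "wt (\<beta>/2) q * (mv \<beta> (lam_exp q))\<^sup>2 \<le> (1 + C\<^sup>2 * (2 powr \<beta>)\<^sup>2) * wt (-(\<beta>/2)) q"
    and "C\<^sup>2 * wt (-(\<beta>/2)) q \<le> wt (\<beta>/2) q * (mv \<beta> (lam_exp q))\<^sup>2"
proof -
  have C0: "0 < C" "C < 1"
  proof -
    have "2 powr \<beta> < 2 powr 1" using b by (intro powr_less_mono) auto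
    moreover have "2 powr 0 < 2 powr \<beta>" using b by (intro powr_less_mono) auto
    ultimately show "0 < C" "C < 1" by (auto simp: C_def)
  qed
  have "wt (\<beta>/2) q * (mv \<beta> (lam_exp q))\<^sup>2 \<le> (1 + C\<^sup>2 * (2 powr \<beta>)\<^sup>2) * wt (-(\<beta>/2)) q
      \<and> C\<^sup>2 * wt (-(\<beta>/2)) q \<le> wt (\<beta>/2) q * (mv \<beta> (lam_exp q))\<^sup>2"
  proof (cases "q = 0")
    case True
    have "lam_abs 0 = 0" by (simp add: lam_abs_def)
    then show ?thesis using True C0 by (simp add: wt_def mv_def power_le_one)
  next
    case False
    define A where "A = lam_abs q"
    have A: "A = 2 ^ lam_exp q" unfolding A_def by (rule lam_abs_eq[OF q False])
    have n: "0 < lam_exp q" using lam_odd[OF q False] by blast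
    have A1: "1 \<le> A" unfolding A using n by simp
    define u where "u = (1 + A) powr \<beta>"
    define v where "v = A powr \<beta>"
    have u0: "0 < u" and v0: "0 < v" using A1 by (auto simp: u_def v_def)
    have vu: "v \<le> u" unfolding u_def v_def using A1 b by (intro powr_mono2) auto
    have uv: "u \<le> 2 powr \<beta> * v"
    proof -
      have "(1 + A) powr \<beta> \<le> (2 * A) powr \<beta>" using A1 b by (intro powr_mono2) auto
      then show ?thesis by (simp add: u_def v_def powr_mult)
    qed
    have ws: "wt (\<beta>/2) q = u" unfolding wt_def u_def A_def by simp
    have wm: "wt (-(\<beta>/2)) q = 1 / u" unfolding wt_def u_def A_def by (simp add: powr_minus_divide)
    have m: "mv \<beta> (lam_exp q) = C / v"
      using mv_formula[OF q False b(1)] by (simp add: C_def v_def A_def powr_minus_divide)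
    have K0: "0 < 2 powr \<beta>" by simp
    have i1: "C\<^sup>2 * u * u \<le> (1 + C\<^sup>2 * (2 powr \<beta>)\<^sup>2) * (v * v)"
    proof -
      have "u * u \<le> (2 powr \<beta> * v) * (2 powr \<beta> * v)" using uv u0 by (intro mult_mono) auto
      then have "C\<^sup>2 * (u * u) \<le> C\<^sup>2 * ((2 powr \<beta> * v) * (2 powr \<beta> * v))" by (intro mult_left_mono) auto
      also have "\<dots> \<le> (1 + C\<^sup>2 * (2 powr \<beta>)\<^sup>2) * (v * v)" by (simp add: power2_eq_square algebra_simps)
      finally show ?thesis by (simp add: mult.assoc)
    qed
    have i2: "C\<^sup>2 * (v * v) \<le> C\<^sup>2 * (u * u)"
      using vu v0 by (intro mult_left_mono mult_mono) auto
    show ?thesis unfolding ws wm m using u0 v0 i1 i2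
      by (simp add: field_simps power2_eq_square)
  qed
  then show "wt (\<beta>/2) q * (mv \<beta> (lam_exp q))\<^sup>2 \<le> (1 + C\<^sup>2 * (2 powr \<beta>)\<^sup>2) * wt (-(\<beta>/2)) q"
    and "C\<^sup>2 * wt (-(\<beta>/2)) q \<le> wt (\<beta>/2) q * (mv \<beta> (lam_exp q))\<^sup>2" by auto
qed

theorem proposition4p1:
  fixes \<alpha> \<beta> s :: real
  assumes "1 < \<alpha>" and "\<alpha> < 2"
    and "\<beta> = 1 - log 2 \<alpha>" and "s = \<beta> / 2"
  shows "\<exists>T :: (rat \<Rightarrow> complex) \<Rightarrow> (rat \<Rightarrow> complex).
     (\<forall>c\<in>H_space (- s). T c \<in> H_space s)
   \<and> (\<forall>c\<in>H_space (- s). \<forall>d\<in>H_space (- s). T (\<lambda>q. c q + d q) = (\<lambda>q. T c q + T d q))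
   \<and> (\<forall>c\<in>H_space (- s). \<forall>a::complex. T (\<lambda>q. a * c q) = (\<lambda>q. a * T c q))
   \<and> (\<forall>c\<in>H_space (- s). \<forall>\<epsilon>>0. \<exists>\<delta>>0. \<forall>d\<in>H_space (- s).
        H_norm (- s) (\<lambda>q. d q - c q) < \<delta> \<longrightarrow> H_norm s (\<lambda>q. T d q - T c q) < \<epsilon>)
   \<and> (\<forall>f. locally_constant f \<longrightarrow> T (fourier f) = fourier (conv (riesz_kernel \<beta>) f))
   \<and> T ` H_space (- s) = H_space s"
proof -
  have l1: "log 2 1 < log 2 \<alpha>" using assms(1) by (subst log_less_cancel_iff) auto
  have l2: "log 2 \<alpha> < log 2 2" using assms(1,2) by (subst log_less_cancel_iff) auto
  have b: "0 < \<beta>" "\<beta> < 1" using l1 l2 assms(3) by auto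
  define C where "C = 2 - 2 powr \<beta>"
  have C0: "0 < C"
  proof -
    have "2 powr \<beta> < 2 powr 1" using b by (intro powr_less_mono) auto
    then show ?thesis by (simp add: C_def)
  qed
  have s: "s = \<beta> / 2" by (rule assms(4))
  interpret M: multop "\<lambda>q. mv \<beta> (lam_exp q)" s "C\<^sup>2" "1 + C\<^sup>2 * (2 powr \<beta>)\<^sup>2"
  proof
    show "0 < C\<^sup>2" using C0 by simp
    show "0 < 1 + C\<^sup>2 * (2 powr \<beta>)\<^sup>2" by (simp add: add_pos_nonneg)
    fix q assume q: "q \<in> Lambda"
    show "wt s q * (mv \<beta> (lam_exp q))\<^sup>2 \<le> (1 + C\<^sup>2 * (2 powr \<beta>)\<^sup>2) * wt (- s) q"
      using bounds(1)[OF b q] unfolding s C_def .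
    show "C\<^sup>2 * wt (- s) q \<le> wt s q * (mv \<beta> (lam_exp q))\<^sup>2"
      using bounds(2)[OF b q] unfolding s C_def .
  qed
  have F: "M.T (fourier f) = fourier (conv (riesz_kernel \<beta>) f)" if lc: "locally_constant f" for f
  proof
    fix q
    show "M.T (fourier f) q = fourier (conv (riesz_kernel \<beta>) f) q"
    proof (cases "q \<in> Lambda")
      case True
      then show ?thesis using main_id[OF lc True b(1)] by (simp add: M.T_def)
    next
      case False
      then show ?thesis by (simp add: M.T_def fourier_def)
    qed
  qed
  show ?thesis
  proof (intro exI[of _ M.T] conjI ballI allI impI)
    show "M.T c \<in> H_space s" if "c \<in> H_space (- s)" for c using that by (rule M.T_maps)
    show "M.T (\<lambda>q. c q + d q) = (\<lambda>q. M.T c q + M.T d q)" for c d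
      by (simp add: M.T_def fun_eq_iff algebra_simps)
    show "M.T (\<lambda>q. a * c q) = (\<lambda>q. a * M.T c q)" for c a
      by (simp add: M.T_def fun_eq_iff algebra_simps)
    show "\<exists>\<delta>>0. \<forall>d\<in>H_space (- s). H_norm (- s) (\<lambda>q. d q - c q) < \<delta> \<longrightarrow> H_norm s (\<lambda>q. M.T d q - M.T c q) < \<epsilon>"
      if "c \<in> H_space (- s)" "0 < \<epsilon>" for c \<epsilon> using that by (rule M.T_cont)
    show "M.T (fourier f) = fourier (conv (riesz_kernel \<beta>) f)" if "locally_constant f" for f
      using that by (rule F)
    show "M.T ` H_space (- s) = H_space s" by (rule M.T_onto)
  qed
qed

end
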